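(* In the Reissner–Nordström spacetime with $m^2\ge q^2$ (and $m>0$), let $r_+=m+\sqrt{m^2-q^2}$. Define, for a vector field $\vec A$, $Q[\vec A]=\int_0^{2\pi}d\varphi\int_0^\pi\sin\theta\,d\theta\int_{r_+}^{\infty}(-A^t)\,r^2\,dr$ (the flux through a slice $t=\mathrm{const}$, $r>r_+$). Then $$Q_1\equiv Q[\vec j(\vec\xi_1)]=\frac{4\pi}{15\,r_+}\left(6-14\frac{m}{r_+}+14\frac{m^2}{r_+^2}-5\frac{m^3}{r_+^3}\right),$$ and, for each $a\in\{2,3,4\}$, $$Q_2\equiv Q[\vec j(\vec\xi_a,\vec\xi_a,\vec\xi_1)]=\frac{8\pi}{27}\,r_+\left(13-16\frac{m}{r_+}+16\frac{m^2}{r_+^2}\right).$$ Moreover $Q[\vec{\mathcal J}(\vec\xi_1)]=4\pi q^2/r_+$ where $\mathcal J^\alpha(\vec\xi_1)=T^{\alpha\beta}\xi_{1\beta}$ with $T^\mu{}_\nu=\frac{q^2}{r^4}\mathrm{diag}(-1,-1,1,1)$. In the Schwarzschild case $q=0$: $Q_1=\pi/(4m)$ and $Q_2=16\pi m/3$.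
   Context: The Reissner–Nordström metric is $ds^2=-f\,dt^2+f^{-1}dr^2+r^2(d\theta^2+\sin^2\theta\,d\varphi^2)$, $f=1-\frac{2m}{r}+\frac{q^2}{r^2}$, considered for $r>r_+$. Killing vectors: $\vec\xi_1=\partial_t$, $\vec\xi_2=\sin\varphi\,\partial_\theta+\cos\varphi\cot\theta\,\partial_\varphi$, $\vec\xi_3=\cos\varphi\,\partial_\theta-\sin\varphi\cot\theta\,\partial_\varphi$, $\vec\xi_4=\partial_\varphi$. The Bel tensor is $$B_{\alpha\beta\lambda\mu}= R_{\alpha\rho\lambda\sigma} R_{\beta}{}^{\rho}{}_{\mu}{}^{\sigma} +R_{\alpha\rho\mu\sigma} R_{\beta}{}^{\rho}{}_{\lambda}{}^{\sigma} -\tfrac{1}{2}g_{\alpha\beta} R_{\rho\tau\lambda\sigma}R^{\rho\tau}{}_{\mu}{}^{\sigma} -\tfrac{1}{2}g_{\lambda\mu} R_{\alpha\rho\sigma\tau}R_{\beta}{}^{\rho\sigma\tau}+ \tfrac{1}{8}g_{\alpha\beta}g_{\lambda\mu} R_{\rho\tau\sigma\nu} R^{\rho\tau\sigma\nu},$$ and the Bel current is $j_\mu(\vec\xi_1,\vec\xi_2,\vec\xi_3)=B_{(\alpha\beta\lambda)\mu}\xi_1^\alpha\xi_2^\beta\xi_3^\lambda$, $\vec j(\vec\xi)=\vec j(\vec\xi,\vec\xi,\vec\xi)$. $A^t$ denotes the $t$-component of $\vec A$ in coordinates $(t,r,\theta,\varphi)$. *)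

theory Defs
  imports "HOL-Analysis.Analysis"
begin

text \<open>Coordinates (t,r,theta,phi) are indices 0,1,2,3 of a point p :: nat => real.
  All index sums range over {..<4}.\<close>

type_synonym point = "nat \<Rightarrow> real"
type_synonym metric = "point \<Rightarrow> nat \<Rightarrow> nat \<Rightarrow> real"
type_synonym vfield = "point \<Rightarrow> nat \<Rightarrow> real"

definition pd :: "(point \<Rightarrow> real) \<Rightarrow> nat \<Rightarrow> point \<Rightarrow> real" where
  "pd F i p = deriv (\<lambda>s. F (p(i := s))) (p i)"

definition Chr :: "metric \<Rightarrow> metric \<Rightarrow> point \<Rightarrow> nat \<Rightarrow> nat \<Rightarrow> nat \<Rightarrow> real" where
  "Chr g gi p a b c =
     (\<Sum>d<4. gi p a d * (pd (\<lambda>y. g y d c) b p + pd (\<lambda>y. g y d b) c p - pd (\<lambda>y. g y b c) d p)) / 2"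

definition RiemUp :: "metric \<Rightarrow> metric \<Rightarrow> point \<Rightarrow> nat \<Rightarrow> nat \<Rightarrow> nat \<Rightarrow> nat \<Rightarrow> real" where
  "RiemUp g gi p a b c d =
     pd (\<lambda>y. Chr g gi y a d b) c p - pd (\<lambda>y. Chr g gi y a c b) d p
     + (\<Sum>e<4. Chr g gi p a c e * Chr g gi p e d b - Chr g gi p a d e * Chr g gi p e c b)"

definition Riem :: "metric \<Rightarrow> metric \<Rightarrow> point \<Rightarrow> nat \<Rightarrow> nat \<Rightarrow> nat \<Rightarrow> nat \<Rightarrow> real" where
  "Riem g gi p a b c d = (\<Sum>e<4. g p a e * RiemUp g gi p e b c d)"

definition Bel :: "metric \<Rightarrow> metric \<Rightarrow> point \<Rightarrow> nat \<Rightarrow> nat \<Rightarrow> nat \<Rightarrow> nat \<Rightarrow> real" where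
  "Bel g gi p al be la mu =
     (let R = Riem g gi p; G = g p; H = gi p in
       (\<Sum>rho<4. \<Sum>sg<4. \<Sum>k<4. \<Sum>l<4. R al rho la sg * H rho k * H sg l * R be k mu l)
     + (\<Sum>rho<4. \<Sum>sg<4. \<Sum>k<4. \<Sum>l<4. R al rho mu sg * H rho k * H sg l * R be k la l)
     - G al be / 2 * (\<Sum>rho<4. \<Sum>ta<4. \<Sum>sg<4. \<Sum>k<4. \<Sum>l<4. \<Sum>n<4.
            R rho ta la sg * H rho k * H ta l * H sg n * R k l mu n)
     - G la mu / 2 * (\<Sum>rho<4. \<Sum>sg<4. \<Sum>ta<4. \<Sum>k<4. \<Sum>l<4. \<Sum>n<4.
            R al rho sg ta * H rho k * H sg l * H ta n * R be k l n)
     + G al be * G la mu / 8 * (\<Sum>rho<4. \<Sum>ta<4. \<Sum>sg<4. \<Sum>nu<4. \<Sum>k<4. \<Sum>l<4. \<Sum>n<4. \<Sum>w<4.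
            R rho ta sg nu * H rho k * H ta l * H sg n * H nu w * R k l n w))"

definition BelCurLow :: "metric \<Rightarrow> metric \<Rightarrow> vfield \<Rightarrow> vfield \<Rightarrow> vfield \<Rightarrow> point \<Rightarrow> nat \<Rightarrow> real" where
  "BelCurLow g gi X Y Z p mu =
     (\<Sum>al<4. \<Sum>be<4. \<Sum>la<4.
        (Bel g gi p al be la mu + Bel g gi p al la be mu + Bel g gi p be al la mu
         + Bel g gi p be la al mu + Bel g gi p la al be mu + Bel g gi p la be al mu) / 6
        * X p al * Y p be * Z p la)"

definition BelCur :: "metric \<Rightarrow> metric \<Rightarrow> vfield \<Rightarrow> vfield \<Rightarrow> vfield \<Rightarrow> vfield" where
  "BelCur g gi X Y Z p al = (\<Sum>mu<4. gi p al mu * BelCurLow g gi X Y Z p mu)"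

definition fRN :: "real \<Rightarrow> real \<Rightarrow> real \<Rightarrow> real" where
  "fRN m q r = 1 - 2 * m / r + q^2 / r^2"

definition gRN :: "real \<Rightarrow> real \<Rightarrow> metric" where
  "gRN m q p a b =
     (if a \<noteq> b then 0
      else if a = 0 then - fRN m q (p 1)
      else if a = 1 then 1 / fRN m q (p 1)
      else if a = 2 then (p 1)^2
      else if a = 3 then (p 1)^2 * (sin (p 2))^2
      else 0)"

definition giRN :: "real \<Rightarrow> real \<Rightarrow> metric" where
  "giRN m q p a b =
     (if a \<noteq> b then 0
      else if a = 0 then - 1 / fRN m q (p 1)
      else if a = 1 then fRN m q (p 1)
      else if a = 2 then 1 / (p 1)^2
      else if a = 3 then 1 / ((p 1)^2 * (sin (p 2))^2)
      else 0)"

definition rplus :: "real \<Rightarrow> real \<Rightarrow> real" where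
  "rplus m q = m + sqrt (m^2 - q^2)"

definition xi1 :: vfield where "xi1 p i = (if i = 0 then 1 else 0)"
definition xi2 :: vfield where
  "xi2 p i = (if i = 2 then sin (p 3) else if i = 3 then cos (p 3) * cot (p 2) else 0)"
definition xi3 :: vfield where
  "xi3 p i = (if i = 2 then cos (p 3) else if i = 3 then - sin (p 3) * cot (p 2) else 0)"
definition xi4 :: vfield where "xi4 p i = (if i = 3 then 1 else 0)"

definition jRN :: "real \<Rightarrow> real \<Rightarrow> vfield \<Rightarrow> vfield \<Rightarrow> vfield \<Rightarrow> vfield" where
  "jRN m q X Y Z = BelCur (gRN m q) (giRN m q) X Y Z"

definition TmixRN :: "real \<Rightarrow> point \<Rightarrow> nat \<Rightarrow> nat \<Rightarrow> real" where
  "TmixRN q p a b = (if a \<noteq> b then 0 else if a \<le> 1 then - (q^2 / (p 1)^4)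
                      else if a \<le> 3 then q^2 / (p 1)^4 else 0)"

definition EMcur :: "real \<Rightarrow> real \<Rightarrow> vfield \<Rightarrow> vfield" where
  "EMcur m q X p al =
     (\<Sum>be<4. (\<Sum>nu<4. TmixRN q p al nu * giRN m q p nu be) * (\<Sum>ga<4. gRN m q p be ga * X p ga))"

definition coords :: "real \<Rightarrow> real \<Rightarrow> real \<Rightarrow> real \<Rightarrow> point" where
  "coords t r th ph = (\<lambda>i. if i = 0 then t else if i = 1 then r else if i = 2 then th else ph)"

definition Qflux :: "real \<Rightarrow> real \<Rightarrow> real \<Rightarrow> vfield \<Rightarrow> real" where
  "Qflux m q t0 A =
     (LBINT ph:{0..2*pi}. LBINT th:{0..pi}. sin th *
        (LBINT r:{rplus m q<..}. - A (coords t0 r th ph) 0 * r^2))"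

end

theory Submission
  imports Defs
begin


definition fp :: "real \<Rightarrow> real \<Rightarrow> real \<Rightarrow> real" where "fp m q r = 2*m/r^2 - 2*q^2/r^3"
definition fpp :: "real \<Rightarrow> real \<Rightarrow> real \<Rightarrow> real" where "fpp m q r = -4*m/r^3 + 6*q^2/r^4"

lemma fRN_der: "r \<noteq> 0 \<Longrightarrow> (fRN m q has_real_derivative fp m q r) (at r)"
  unfolding fRN_def fp_def
  by (auto intro!: derivative_eq_intros simp: field_simps eval_nat_numeral)

lemma fp_der: "r \<noteq> 0 \<Longrightarrow> ((\<lambda>s. fp m q s) has_real_derivative fpp m q r) (at r)"
  unfolding fpp_def fp_def
  by (auto intro!: derivative_eq_intros simp: field_simps eval_nat_numeral)

definition dgm :: "real \<Rightarrow> real \<Rightarrow> real \<Rightarrow> real \<Rightarrow> nat \<Rightarrow> real" where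
  "dgm m q r th a = (if a = 0 then - fRN m q r else if a = 1 then 1 / fRN m q r
     else if a = 2 then r^2 else if a = 3 then r^2 * (sin th)^2 else 0)"
definition dgmr :: "real \<Rightarrow> real \<Rightarrow> real \<Rightarrow> real \<Rightarrow> nat \<Rightarrow> real" where
  "dgmr m q r th a = (if a = 0 then - fp m q r else if a = 1 then - fp m q r / (fRN m q r)^2
     else if a = 2 then 2*r else if a = 3 then 2*r * (sin th)^2 else 0)"
definition dgmth :: "real \<Rightarrow> real \<Rightarrow> real \<Rightarrow> real \<Rightarrow> nat \<Rightarrow> real" where
  "dgmth m q r th a = (if a = 3 then 2 * r^2 * sin th * cos th else 0)"
definition dgmrr :: "real \<Rightarrow> real \<Rightarrow> real \<Rightarrow> real \<Rightarrow> nat \<Rightarrow> real" where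
  "dgmrr m q r th a = (if a = 0 then - fpp m q r else if a = 1 then - fpp m q r / (fRN m q r)^2 + 2 * (fp m q r)^2 / (fRN m q r)^3
     else if a = 2 then 2 else if a = 3 then 2 * (sin th)^2 else 0)"
definition dgmrth :: "real \<Rightarrow> real \<Rightarrow> real \<Rightarrow> real \<Rightarrow> nat \<Rightarrow> real" where
  "dgmrth m q r th a = (if a = 3 then 4 * r * sin th * cos th else 0)"
definition dgmthth :: "real \<Rightarrow> real \<Rightarrow> real \<Rightarrow> real \<Rightarrow> nat \<Rightarrow> real" where
  "dgmthth m q r th a = (if a = 3 then 2 * r^2 * ((cos th)^2 - (sin th)^2) else 0)"

lemma D1: "r \<noteq> 0 \<Longrightarrow> fRN m q r \<noteq> 0 \<Longrightarrow> ((\<lambda>s. dgm m q s th a) has_real_derivative dgmr m q r th a) (at r)"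
  unfolding dgm_def dgmr_def
  by (cases "a = 0"; cases "a = 1"; cases "a = 2"; cases "a = 3"; simp; auto intro!: derivative_eq_intros fRN_der simp: field_simps eval_nat_numeral)

lemma D2: "((\<lambda>s. dgm m q r s a) has_real_derivative dgmth m q r th a) (at th)"
  unfolding dgm_def dgmth_def
  by (cases "a = 0"; cases "a = 1"; cases "a = 2"; cases "a = 3"; simp; auto intro!: derivative_eq_intros simp: field_simps eval_nat_numeral)

lemma D3: "r \<noteq> 0 \<Longrightarrow> fRN m q r \<noteq> 0 \<Longrightarrow> ((\<lambda>s. dgmr m q s th a) has_real_derivative dgmrr m q r th a) (at r)"
  unfolding dgmr_def dgmrr_def
  by (cases "a = 0"; cases "a = 1"; cases "a = 2"; cases "a = 3"; simp; auto intro!: derivative_eq_intros fRN_der fp_der simp: field_simps eval_nat_numeral)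

lemma D4: "((\<lambda>s. dgmr m q r s a) has_real_derivative dgmrth m q r th a) (at th)"
  unfolding dgmr_def dgmrth_def
  by (cases "a = 0"; cases "a = 1"; cases "a = 2"; cases "a = 3"; simp; auto intro!: derivative_eq_intros simp: field_simps eval_nat_numeral)

lemma D5: "((\<lambda>s. dgmth m q s th a) has_real_derivative dgmrth m q r th a) (at r)"
  unfolding dgmth_def dgmrth_def
  by (cases "a = 0"; cases "a = 1"; cases "a = 2"; cases "a = 3"; simp; auto intro!: derivative_eq_intros simp: field_simps eval_nat_numeral)

lemma D6: "((\<lambda>s. dgmth m q r s a) has_real_derivative dgmthth m q r th a) (at th)"
  unfolding dgmth_def dgmthth_def
  by (cases "a = 0"; cases "a = 1"; cases "a = 2"; cases "a = 3"; simp; auto intro!: derivative_eq_intros simp: field_simps eval_nat_numeral power2_eq_square)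

lemma gRN_eq: "gRN m q p a b = (if a = b then dgm m q (p 1) (p 2) a else 0)"
  unfolding gRN_def dgm_def by auto

lemma giRN_eq: "giRN m q p a b = (if a = b then 1 / dgm m q (p 1) (p 2) a else 0)"
  unfolding giRN_def dgm_def by auto

definition Dd :: "real \<Rightarrow> real \<Rightarrow> real \<Rightarrow> real \<Rightarrow> nat \<Rightarrow> nat \<Rightarrow> nat \<Rightarrow> real" where
  "Dd m q r th d c b = (if d = c then (if b = 1 then dgmr m q r th d else if b = 2 then dgmth m q r th d else 0) else 0)"
definition Ddr :: "real \<Rightarrow> real \<Rightarrow> real \<Rightarrow> real \<Rightarrow> nat \<Rightarrow> nat \<Rightarrow> nat \<Rightarrow> real" where
  "Ddr m q r th d c b = (if d = c then (if b = 1 then dgmrr m q r th d else if b = 2 then dgmrth m q r th d else 0) else 0)"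
definition Ddth :: "real \<Rightarrow> real \<Rightarrow> real \<Rightarrow> real \<Rightarrow> nat \<Rightarrow> nat \<Rightarrow> nat \<Rightarrow> real" where
  "Ddth m q r th d c b = (if d = c then (if b = 1 then dgmrth m q r th d else if b = 2 then dgmthth m q r th d else 0) else 0)"

lemma pd_g:
  assumes "p 1 \<noteq> 0" "fRN m q (p 1) \<noteq> 0"
  shows "pd (\<lambda>y. gRN m q y d c) b p = Dd m q (p 1) (p 2) d c b"
proof -
  have e: "(\<lambda>s. gRN m q (p(b := s)) d c) = (\<lambda>s. if d = c then dgm m q ((p(b := s)) 1) ((p(b := s)) 2) d else 0)"
    by (simp add: gRN_eq)
  show ?thesis
    unfolding pd_def e Dd_def
    using DERIV_imp_deriv[OF D1[OF assms, of "p 2" d]] DERIV_imp_deriv[OF D2[of m q "p 1" d "p 2"]]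
    by (cases "d = c"; cases "b = 1"; cases "b = 2"; simp)
qed

definition ChrF :: "real \<Rightarrow> real \<Rightarrow> real \<Rightarrow> real \<Rightarrow> nat \<Rightarrow> nat \<Rightarrow> nat \<Rightarrow> real" where
  "ChrF m q r th a b c = (if a < 4 then (Dd m q r th a c b + Dd m q r th a b c - Dd m q r th b c a) / (2 * dgm m q r th a) else 0)"

lemma sum4_delta: "(\<Sum>d<(4::nat). (if a = d then x else 0) * (F d::real)) = (if a < 4 then x * F a else 0)"
proof -
  have e: "(\<lambda>d. (if a = d then x else 0) * F d) = (\<lambda>d. if a = d then x * F d else 0)" by (simp add: fun_eq_iff)
  show ?thesis unfolding e by (simp add: sum.delta sum.delta')
qed

lemma Chr_eq:
  assumes "y 1 \<noteq> 0" "fRN m q (y 1) \<noteq> 0"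
  shows "Chr (gRN m q) (giRN m q) y a b c = ChrF m q (y 1) (y 2) a b c"
  unfolding Chr_def giRN_eq pd_g[of y, OF assms] ChrF_def
  apply (simp only: sum4_delta)
  by (cases "dgm m q (y 1) (y 2) a = 0") (auto simp: field_simps)

lemma Dd_r: "r \<noteq> 0 \<Longrightarrow> fRN m q r \<noteq> 0 \<Longrightarrow> ((\<lambda>s. Dd m q s th d c b) has_real_derivative Ddr m q r th d c b) (at r)"
  unfolding Dd_def Ddr_def
  by (cases "d = c"; cases "b = 1"; cases "b = 2"; simp add: D3 D5)

lemma Dd_th: "((\<lambda>s. Dd m q r s d c b) has_real_derivative Ddth m q r th d c b) (at th)"
  unfolding Dd_def Ddth_def
  by (cases "d = c"; cases "b = 1"; cases "b = 2"; simp add: D4 D6)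

definition ChrFr :: "real \<Rightarrow> real \<Rightarrow> real \<Rightarrow> real \<Rightarrow> nat \<Rightarrow> nat \<Rightarrow> nat \<Rightarrow> real" where
  "ChrFr m q r th a b c = (if a < 4 then
     ((Ddr m q r th a c b + Ddr m q r th a b c - Ddr m q r th b c a) * (2 * dgm m q r th a)
      - (Dd m q r th a c b + Dd m q r th a b c - Dd m q r th b c a) * (2 * dgmr m q r th a))
     / (2 * dgm m q r th a)^2 else 0)"
definition ChrFth :: "real \<Rightarrow> real \<Rightarrow> real \<Rightarrow> real \<Rightarrow> nat \<Rightarrow> nat \<Rightarrow> nat \<Rightarrow> real" where
  "ChrFth m q r th a b c = (if a < 4 then
     ((Ddth m q r th a c b + Ddth m q r th a b c - Ddth m q r th b c a) * (2 * dgm m q r th a)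
      - (Dd m q r th a c b + Dd m q r th a b c - Dd m q r th b c a) * (2 * dgmth m q r th a))
     / (2 * dgm m q r th a)^2 else 0)"

lemma ChrF_r:
  assumes "r \<noteq> 0" "fRN m q r \<noteq> 0" "a < 4 \<Longrightarrow> dgm m q r th a \<noteq> 0"
  shows "((\<lambda>s. ChrF m q s th a b c) has_real_derivative ChrFr m q r th a b c) (at r)"
proof (cases "a < 4")
  case True
  have "((\<lambda>s. (Dd m q s th a c b + Dd m q s th a b c - Dd m q s th b c a) / (2 * dgm m q s th a))
     has_real_derivative (((Ddr m q r th a c b + Ddr m q r th a b c - Ddr m q r th b c a) * (2 * dgm m q r th a)
      - (Dd m q r th a c b + Dd m q r th a b c - Dd m q r th b c a) * (2 * dgmr m q r th a))
     / ((2 * dgm m q r th a) * (2 * dgm m q r th a)))) (at r)"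
    using assms True by (intro DERIV_divide DERIV_add DERIV_diff DERIV_cmult Dd_r D1) auto
  then show ?thesis using True unfolding ChrF_def ChrFr_def by (simp add: power2_eq_square)
next
  case False
  then show ?thesis unfolding ChrF_def ChrFr_def by simp
qed

lemma ChrF_th:
  assumes "a < 4 \<Longrightarrow> dgm m q r th a \<noteq> 0"
  shows "((\<lambda>s. ChrF m q r s a b c) has_real_derivative ChrFth m q r th a b c) (at th)"
proof (cases "a < 4")
  case True
  have "((\<lambda>s. (Dd m q r s a c b + Dd m q r s a b c - Dd m q r s b c a) / (2 * dgm m q r s a))
     has_real_derivative (((Ddth m q r th a c b + Ddth m q r th a b c - Ddth m q r th b c a) * (2 * dgm m q r th a)
      - (Dd m q r th a c b + Dd m q r th a b c - Dd m q r th b c a) * (2 * dgmth m q r th a))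
     / ((2 * dgm m q r th a) * (2 * dgm m q r th a)))) (at th)"
    using assms True by (intro DERIV_divide DERIV_add DERIV_diff DERIV_cmult Dd_th D2) auto
  then show ?thesis using True unfolding ChrF_def ChrFth_def by (simp add: power2_eq_square)
next
  case False
  then show ?thesis unfolding ChrF_def ChrFth_def by simp
qed

lemma dgm_nz: "r \<noteq> 0 \<Longrightarrow> fRN m q r \<noteq> 0 \<Longrightarrow> sin th \<noteq> 0 \<Longrightarrow> a < 4 \<Longrightarrow> dgm m q r th a \<noteq> 0"
  unfolding dgm_def by (auto simp: less_Suc_eq numeral_eq_Suc)

lemma pd_Chr:
  assumes R0: "\<And>s. s > R0 \<Longrightarrow> s \<noteq> 0 \<and> fRN m q s \<noteq> 0" and p1: "p 1 > R0" and s2: "sin (p 2) \<noteq> 0"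
  shows "pd (\<lambda>y. Chr (gRN m q) (giRN m q) y a d b) c p =
    (if c = 1 then ChrFr m q (p 1) (p 2) a d b else if c = 2 then ChrFth m q (p 1) (p 2) a d b else 0)"
proof -
  have nz: "a < 4 \<Longrightarrow> dgm m q (p 1) (p 2) a \<noteq> 0" using dgm_nz R0[OF p1] s2 by blast
  consider "c = 1" | "c = 2" | "c \<noteq> 1 \<and> c \<noteq> 2" by blast
  then show ?thesis
  proof cases
    case 1
    have "((\<lambda>s. Chr (gRN m q) (giRN m q) (p(c := s)) a d b) has_real_derivative ChrFr m q (p 1) (p 2) a d b) (at (p c))"
    proof (rule has_field_derivative_transform_within_open[where S="{R0<..}"])
      show "((\<lambda>s. ChrF m q s (p 2) a d b) has_real_derivative ChrFr m q (p 1) (p 2) a d b) (at (p c))"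
        using ChrF_r[of "p 1" m q a "p 2" d b] R0[OF p1] nz 1 by auto
      show "p c \<in> {R0<..}" using p1 1 by simp
      fix s assume "s \<in> {R0<..}"
      then show "ChrF m q s (p 2) a d b = Chr (gRN m q) (giRN m q) (p(c := s)) a d b"
        using Chr_eq[of "p(c := s)" m q a d b] R0[of s] 1 by auto
    qed auto
    then show ?thesis unfolding pd_def using 1 by (simp add: DERIV_imp_deriv)
  next
    case 2
    have e: "(\<lambda>s. Chr (gRN m q) (giRN m q) (p(c := s)) a d b) = (\<lambda>s. ChrF m q (p 1) s a d b)"
      using Chr_eq[of "p(c := s)" m q a d b for s] R0[OF p1] 2 by (auto simp: fun_eq_iff)
    show ?thesis unfolding pd_def e using 2 ChrF_th[of a m q "p 1" "p 2" d b] nz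
      by (simp add: DERIV_imp_deriv)
  next
    case 3
    have e: "(\<lambda>s. Chr (gRN m q) (giRN m q) (p(c := s)) a d b) = (\<lambda>s. ChrF m q (p 1) (p 2) a d b)"
      using Chr_eq[of "p(c := s)" m q a d b for s] R0[OF p1] 3 by (auto simp: fun_eq_iff)
    show ?thesis unfolding pd_def e using 3 by simp
  qed
qed

definition RU :: "real \<Rightarrow> real \<Rightarrow> real \<Rightarrow> real \<Rightarrow> nat \<Rightarrow> nat \<Rightarrow> nat \<Rightarrow> nat \<Rightarrow> real" where
  "RU m q r th a b c d =
     (if c = 1 then ChrFr m q r th a d b else if c = 2 then ChrFth m q r th a d b else 0)
   - (if d = 1 then ChrFr m q r th a c b else if d = 2 then ChrFth m q r th a c b else 0)
   + (\<Sum>e<4. ChrF m q r th a c e * ChrF m q r th e d b - ChrF m q r th a d e * ChrF m q r th e c b)"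

definition kap :: "real \<Rightarrow> real \<Rightarrow> real \<Rightarrow> nat \<Rightarrow> nat \<Rightarrow> real" where
  "kap m q r a b = (if (a = 0 \<and> b = 1) \<or> (a = 1 \<and> b = 0) then - fpp m q r / 2
     else if (a = 2 \<and> b = 3) \<or> (a = 3 \<and> b = 2) then (1 - fRN m q r) / r^2 else - fp m q r / (2 * r))"

definition Gd :: "real \<Rightarrow> real \<Rightarrow> real \<Rightarrow> real \<Rightarrow> nat \<Rightarrow> nat \<Rightarrow> real" where
  "Gd m q r th a c = (if a = c then dgm m q r th a else 0)"

definition RF :: "real \<Rightarrow> real \<Rightarrow> real \<Rightarrow> real \<Rightarrow> nat \<Rightarrow> nat \<Rightarrow> nat \<Rightarrow> nat \<Rightarrow> real" where
  "RF m q r th a b c d = kap m q r a b * (Gd m q r th a c * Gd m q r th b d - Gd m q r th a d * Gd m q r th b c)"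

lemma sum4: "(\<Sum>e<(4::nat). F e) = F 0 + F 1 + F 2 + F 3"
  by (simp add: eval_nat_numeral)

lemma lt4: "(a::nat) < 4 \<longleftrightarrow> a = 0 \<or> a = 1 \<or> a = 2 \<or> a = 3" by auto

lemma RU_closed:
  assumes "r \<noteq> 0" "fRN m q r \<noteq> 0" "sin th \<noteq> 0" "a < 4" "b < 4" "c < 4" "d < 4"
  shows "dgm m q r th a * RU m q r th a b c d = RF m q r th a b c d"
  using assms(4-7) unfolding lt4
  apply (elim disjE)
  apply (simp_all add: RU_def sum4 ChrF_def ChrFr_def ChrFth_def Dd_def Ddr_def Ddth_def dgm_def dgmr_def dgmth_def
     dgmrr_def dgmrth_def dgmthth_def RF_def Gd_def kap_def)
  using assms(1-3)
  apply (simp_all add: field_simps)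
  apply (simp_all add: eval_nat_numeral algebra_simps)
  done

lemma RiemUp_eq:
  assumes R0: "\<And>s. s > R0 \<Longrightarrow> s \<noteq> 0 \<and> fRN m q s \<noteq> 0" and p1: "p 1 > R0" and s2: "sin (p 2) \<noteq> 0"
  shows "RiemUp (gRN m q) (giRN m q) p a b c d = RU m q (p 1) (p 2) a b c d"
  unfolding RiemUp_def RU_def
  by (simp add: pd_Chr[OF R0 p1 s2] Chr_eq[of p, OF conjunct1[OF R0[OF p1]] conjunct2[OF R0[OF p1]]])

lemma Riem_closed:
  assumes R0: "\<And>s. s > R0 \<Longrightarrow> s \<noteq> 0 \<and> fRN m q s \<noteq> 0" and p1: "p 1 > R0" and s2: "sin (p 2) \<noteq> 0"
    and "a < 4" "b < 4" "c < 4" "d < 4"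
  shows "Riem (gRN m q) (giRN m q) p a b c d = RF m q (p 1) (p 2) a b c d"
proof -
  have "Riem (gRN m q) (giRN m q) p a b c d = dgm m q (p 1) (p 2) a * RU m q (p 1) (p 2) a b c d"
    unfolding Riem_def using assms by (simp only: gRN_eq[of m q p] sum4_delta) (simp add: RiemUp_eq[OF R0 p1 s2])
  also have "\<dots> = RF m q (p 1) (p 2) a b c d"
    using RU_closed[of "p 1" m q "p 2" a b c d] R0[OF p1] s2 assms by auto
  finally show ?thesis .
qed

lemma ifm1: "(x::real) * (if P then y else 0) = (if P then x * y else 0)" by simp
lemma ifm2: "(if P then y else 0) * (x::real) = (if P then y * x else 0)" by simp
lemma sum_lt: "(\<Sum>x<(n::nat). if x < n then f x else (0::real)) = sum f {..<n}"
  by (rule sum.cong) auto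
lemma sum_if_const: "(\<Sum>x\<in>A. if P then f x else (0::real)) = (if P then sum f A else 0)" by simp

definition DG :: "(nat \<Rightarrow> real) \<Rightarrow> nat \<Rightarrow> nat \<Rightarrow> real" where
  "DG G a c = (if a = c then G a else 0)"

lemma Bel_red:
  fixes g gi :: metric and G :: "nat \<Rightarrow> real"
  assumes g: "\<And>a b. g p a b = DG G a b"
    and gi: "\<And>a b. gi p a b = DG (\<lambda>a. 1 / G a) a b"
  defines "RR \<equiv> Riem g gi p"
  shows "Bel g gi p al be la mu =
       (\<Sum>rho<4. \<Sum>sg<4. RR al rho la sg * (1 / G rho) * (1 / G sg) * RR be rho mu sg)
     + (\<Sum>rho<4. \<Sum>sg<4. RR al rho mu sg * (1 / G rho) * (1 / G sg) * RR be rho la sg)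
     - DG G al be / 2 * (\<Sum>rho<4. \<Sum>ta<4. \<Sum>sg<4.
            RR rho ta la sg * (1 / G rho) * (1 / G ta) * (1 / G sg) * RR rho ta mu sg)
     - DG G la mu / 2 * (\<Sum>rho<4. \<Sum>sg<4. \<Sum>ta<4.
            RR al rho sg ta * (1 / G rho) * (1 / G sg) * (1 / G ta) * RR be rho sg ta)
     + DG G al be * DG G la mu / 8 * (\<Sum>rho<4. \<Sum>ta<4. \<Sum>sg<4. \<Sum>nu<4.
            RR rho ta sg nu * (1 / G rho) * (1 / G ta) * (1 / G sg) * (1 / G nu) * RR rho ta sg nu)"
  unfolding Bel_def Let_def g gi DG_def
  apply (simp only: ifm1 ifm2 sum_if_const)
  apply (simp add: sum.delta sum.delta' ifm1 ifm2 sum_if_const sum_lt RR_def)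
  done

definition "k01 m q r = - fpp m q r / 2"
definition "kb m q r = - fp m q r / (2 * r)"
definition "k23 m q r = (1 - fRN m q r) / r^2"

lemma kap_eq: "kap m q r a b = (if (a = 0 \<and> b = 1) \<or> (a = 1 \<and> b = 0) then k01 m q r
     else if (a = 2 \<and> b = 3) \<or> (a = 3 \<and> b = 2) then k23 m q r else kb m q r)"
  unfolding kap_def k01_def kb_def k23_def by simp

lemma g_DG: "gRN m q p a b = DG (dgm m q (p 1) (p 2)) a b"
  unfolding gRN_eq DG_def by simp
lemma gi_DG: "giRN m q p a b = DG (\<lambda>a. 1 / dgm m q (p 1) (p 2) a) a b"
  unfolding giRN_eq DG_def by simp

lemma Bel0000:
  assumes R0: "\<And>s. s > R0 \<Longrightarrow> s \<noteq> 0 \<and> fRN m q s \<noteq> 0" and p1: "p 1 > R0" and s2: "sin (p 2) \<noteq> 0"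
  shows "Bel (gRN m q) (giRN m q) p 0 0 0 0 = (fRN m q (p 1))^2 / 2 * ((k01 m q (p 1))^2 + 4 * (kb m q (p 1))^2 + (k23 m q (p 1))^2)"
  using R0[OF p1] s2
  apply (simp only: Bel_red[OF g_DG gi_DG] sum4)
  apply (simp add: Riem_closed[OF R0 p1 s2] RF_def Gd_def kap_eq DG_def dgm_def)
  apply (simp add: field_simps power2_eq_square)
  done

lemma jt_xi1:
  assumes R0: "\<And>s. s > R0 \<Longrightarrow> s \<noteq> 0 \<and> fRN m q s \<noteq> 0" and p1: "p 1 > R0" and s2: "sin (p 2) \<noteq> 0"
  shows "BelCur (gRN m q) (giRN m q) xi1 xi1 xi1 p 0 = - fRN m q (p 1) / 2 * ((k01 m q (p 1))^2 + 4 * (kb m q (p 1))^2 + (k23 m q (p 1))^2)"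
  using R0[OF p1]
  apply (simp add: BelCur_def BelCurLow_def sum4 giRN_eq xi1_def Bel0000[OF R0 p1 s2])
  apply (simp add: dgm_def field_simps power2_eq_square)
  done

lemma jt_X:
  assumes R0: "\<And>s. s > R0 \<Longrightarrow> s \<noteq> 0 \<and> fRN m q s \<noteq> 0" and p1: "p 1 > R0" and s2: "sin (p 2) \<noteq> 0"
    and X0: "X p 0 = 0" and X1: "X p 1 = 0"
  shows "BelCur (gRN m q) (giRN m q) X X xi1 p 0 =
     - (dgm m q (p 1) (p 2) 2 * (X p 2)^2 + dgm m q (p 1) (p 2) 3 * (X p 3)^2) *
       ((k01 m q (p 1))^2 / 2 + (k23 m q (p 1))^2 / 2 - 2 * kb m q (p 1) * (k01 m q (p 1) + k23 m q (p 1))) / 3"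
  using R0[OF p1] s2
  using X1 apply (simp add: BelCur_def BelCurLow_def sum4 giRN_eq xi1_def X0 X1)
  apply (simp only: Bel_red[OF g_DG gi_DG] sum4)
  apply (simp add: Riem_closed[OF R0 p1 s2] RF_def Gd_def kap_eq DG_def dgm_def)
  apply (simp add: field_simps power2_eq_square)
  apply (simp add: eval_nat_numeral algebra_simps)
  done


lemma inv_pow_int:
  fixes a :: real and n :: nat
  assumes a: "a > 0"
  shows "set_integrable lborel {a<..} (\<lambda>r. 1 / r^(n+2))"
    "(LBINT r:{a<..}. 1 / r^(n+2)) = 1 / (real (n+1) * a^(n+1))"
proof -
  define F where "F = (\<lambda>r::real. - (1 / real (n+1)) * inverse (r^(n+1)))"
  have D: "(F has_real_derivative 1 / x^(n+2)) (at x)" if "x > 0" for x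
  proof -
    have p: "((\<lambda>r. r^(n+1)) has_real_derivative real (n+1) * x^n) (at x)"
      using DERIV_pow[of "n+1" x UNIV] by simp
    have h: "((\<lambda>r. inverse (r^(n+1))) has_real_derivative (- (real (n+1) * x^n * inverse ((x^(n+1)) ^ Suc (Suc 0))))) (at x)"
      by (rule DERIV_inverse_fun[OF p]) (use that in \<open>simp add: interior_open\<close>)
    have "(F has_real_derivative - (1 / real (n+1)) * (- (real (n+1) * x^n * inverse ((x^(n+1)) ^ Suc (Suc 0))))) (at x)"
      unfolding F_def by (rule DERIV_cmult[OF h])
    moreover have "- (1 / real (n+1)) * (- (real (n+1) * x^n * inverse ((x^(n+1)) ^ Suc (Suc 0)))) = 1 / x^(n+2)"
    proof -
      have e: "(x^(n+1)) ^ Suc (Suc 0) = x^n * x^(n+2)"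
        by (simp flip: power_add)
      have "x^n \<noteq> 0" "x^(n+2) \<noteq> 0" using that by auto
      then have "\<forall>c::real. c \<noteq> 0 \<longrightarrow> - (1 / c) * (- (c * x^n * inverse (x^n * x^(n+2)))) = 1 / x^(n+2)"
        by (simp add: field_simps)
      then show ?thesis unfolding e by (metis of_nat_eq_0_iff add_eq_0_iff_both_eq_0 one_neq_zero)
    qed
    ultimately show ?thesis by simp
  qed
  have C: "isCont (\<lambda>r. 1 / r^(n+2)) x" if "x > 0" for x :: real
  proof -
    have "continuous_on {0<..} (\<lambda>r::real. 1 / r^(n+2))" by (intro continuous_intros) auto
    then show ?thesis by (rule continuous_on_interior) (use that in \<open>simp add: interior_open\<close>)
  qed
  have A: "((F \<circ> real_of_ereal) \<longlongrightarrow> F a) (at_right (ereal a))"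
    unfolding ereal_tendsto_simps F_def using a
    by (auto intro!: tendsto_eq_intros)
  have B: "((F \<circ> real_of_ereal) \<longlongrightarrow> 0) (at_left \<infinity>)"
    unfolding ereal_tendsto_simps F_def
    by real_asymp
  have I: "set_integrable lborel (einterval (ereal a) \<infinity>) (\<lambda>r. 1 / r^(n+2))"
     "(LBINT x=ereal a..\<infinity>. 1 / x^(n+2)) = 0 - F a"
    by (rule interval_integral_FTC_nonneg[where F = F, OF _ D C _ A B]; use a in \<open>auto\<close>)+
  have e: "einterval (ereal a) \<infinity> = {a<..}" by (auto simp: einterval_def)
  show "set_integrable lborel {a<..} (\<lambda>r. 1 / r^(n+2))" using I(1) e by simp
  show "(LBINT r:{a<..}. 1 / r^(n+2)) = 1 / (real (n+1) * a^(n+1))"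
    using I(2) unfolding interval_integral_to_infinity_eq F_def by (simp add: field_simps)
qed
lemma poly_int:
  fixes a c2 c3 c4 c5 c6 c7 c8 :: real
  assumes a: "a > 0"
  shows "(LBINT r:{a<..}. c2 / r^2 + c3 / r^3 + c4 / r^4 + c5 / r^5 + c6 / r^6 + c7 / r^7 + c8 / r^8)
    = c2 / a + c3 / (2 * a^2) + c4 / (3 * a^3) + c5 / (4 * a^4) + c6 / (5 * a^5) + c7 / (6 * a^6) + c8 / (7 * a^7)"
proof -
  note I = inv_pow_int[OF a]
  have i: "\<And>n c. set_integrable lborel {a<..} (\<lambda>r. c * (1 / r^(n+2)))"
    using I(1) by (intro set_integrable_mult_right) auto
  have v: "(LBINT r:{a<..}. c * (1 / r^(n+2))) = c / (real (n+1) * a^(n+1))" for n c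
  proof -
    have "(LBINT r:{a<..}. c * (1 / r^(n+2))) = c * (LBINT r:{a<..}. 1 / r^(n+2))"
      by (rule set_integral_mult_right)
    also have "\<dots> = c * (1 / (real (n+1) * a^(n+1)))" by (simp only: I(2))
    finally show ?thesis by simp
  qed
  have e: "(\<lambda>r::real. c2 / r^2 + c3 / r^3 + c4 / r^4 + c5 / r^5 + c6 / r^6 + c7 / r^7 + c8 / r^8) =
     (\<lambda>r. c2 * (1 / r^(0+2)) + c3 * (1 / r^(1+2)) + c4 * (1 / r^(2+2)) + c5 * (1 / r^(3+2))
        + c6 * (1 / r^(4+2)) + c7 * (1 / r^(5+2)) + c8 * (1 / r^(6+2)))"
    by (simp add: fun_eq_iff eval_nat_numeral)
  show ?thesis
    unfolding e
    apply (simp only: set_integral_add(2) set_integral_add(1) i v)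
    using a apply (simp add: field_simps eval_nat_numeral)
    done
qed

lemma Icc_FTC:
  fixes f g G :: "real \<Rightarrow> real"
  assumes ab: "a \<le> b" and fg: "\<And>x. a < x \<Longrightarrow> x < b \<Longrightarrow> f x = g x"
    and G: "\<And>x. (G has_real_derivative g x) (at x)" and c: "continuous_on {a..b} g"
  shows "(LBINT x:{a..b}. f x) = G b - G a"
proof -
  have "(LBINT x:{a..b}. f x) = (LBINT x=a..b. f x)" by (rule interval_integral_Icc[OF ab, symmetric])
  also have "\<dots> = (LBINT x=a..b. g x)"
    by (rule interval_integral_cong) (use ab fg in \<open>auto simp: einterval_iff min_def max_def\<close>)
  also have "\<dots> = G b - G a"
    by (rule interval_integral_FTC_finite) (use ab c G in \<open>auto simp: min_def max_def has_real_derivative_iff_has_vector_derivative[symmetric] intro: has_field_derivative_at_within\<close>)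
  finally show ?thesis .
qed



lemma Qflux_gen:
  fixes A :: vfield and S :: "real \<Rightarrow> real \<Rightarrow> real" and Gt :: "real \<Rightarrow> real \<Rightarrow> real" and Gp :: "real \<Rightarrow> real"
  assumes a: "rplus m q > 0"
    and pt: "\<And>r th ph. r > rplus m q \<Longrightarrow> 0 < th \<Longrightarrow> th < pi \<Longrightarrow>
      - A (coords t0 r th ph) 0 * r^2 = S th ph * (c2 / r^2 + c3 / r^3 + c4 / r^4 + c5 / r^5 + c6 / r^6 + c7 / r^7 + c8 / r^8)"
    and Gt: "\<And>ph x. (Gt ph has_real_derivative sin x * S x ph) (at x)"
    and ct: "\<And>ph. continuous_on {0..pi} (\<lambda>x. sin x * S x ph)"
    and Gp: "\<And>x. (Gp has_real_derivative (Gt x pi - Gt x 0)) (at x)"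
    and cp: "continuous_on {0..2*pi} (\<lambda>x. Gt x pi - Gt x 0)"
  defines "K \<equiv> c2 / rplus m q + c3 / (2 * (rplus m q)^2) + c4 / (3 * (rplus m q)^3) + c5 / (4 * (rplus m q)^4)
     + c6 / (5 * (rplus m q)^5) + c7 / (6 * (rplus m q)^6) + c8 / (7 * (rplus m q)^7)"
  shows "Qflux m q t0 A = (Gp (2*pi) - Gp 0) * K"
proof -
  have inner: "(LBINT r:{rplus m q<..}. - A (coords t0 r th ph) 0 * r^2) = S th ph * K"
    if "0 < th" "th < pi" for th ph
  proof -
    have "(LBINT r:{rplus m q<..}. - A (coords t0 r th ph) 0 * r^2) =
      (LBINT r:{rplus m q<..}. S th ph * (c2 / r^2 + c3 / r^3 + c4 / r^4 + c5 / r^5 + c6 / r^6 + c7 / r^7 + c8 / r^8))"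
      by (rule set_lebesgue_integral_cong) (use pt that in auto)
    also have "\<dots> = S th ph * K"
      unfolding set_integral_mult_right poly_int[OF a] K_def ..
    finally show ?thesis .
  qed
  have th: "(LBINT th:{0..pi}. sin th * (LBINT r:{rplus m q<..}. - A (coords t0 r th ph) 0 * r^2))
      = K * Gt ph pi - K * Gt ph 0" for ph
  proof (rule Icc_FTC[where g = "\<lambda>x. K * (sin x * S x ph)"])
    show "0 \<le> pi" by simp
    show "sin x * (LBINT r:{rplus m q<..}. - A (coords t0 r x ph) 0 * r^2) = K * (sin x * S x ph)"
      if "0 < x" "x < pi" for x using inner[OF that, of ph] by simp
    show "((\<lambda>x. K * Gt ph x) has_real_derivative K * (sin x * S x ph)) (at x)" for x
      by (rule DERIV_cmult[OF Gt])
    show "continuous_on {0..pi} (\<lambda>x. K * (sin x * S x ph))"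
      by (intro continuous_intros ct)
  qed
  have "Qflux m q t0 A = (LBINT ph:{0..2*pi}. K * Gt ph pi - K * Gt ph 0)"
    unfolding Qflux_def th ..
  also have "\<dots> = K * Gp (2*pi) - K * Gp 0"
  proof (rule Icc_FTC[where g = "\<lambda>x. K * (Gt x pi - Gt x 0)"])
    show "0 \<le> 2 * pi" by simp
    show "K * Gt x pi - K * Gt x 0 = K * (Gt x pi - Gt x 0)" for x by (simp add: algebra_simps)
    show "((\<lambda>x. K * Gp x) has_real_derivative K * (Gt x pi - Gt x 0)) (at x)" for x
      by (rule DERIV_cmult[OF Gp])
    show "continuous_on {0..2*pi} (\<lambda>x. K * (Gt x pi - Gt x 0))"
      by (intro continuous_intros cp)
  qed
  finally show ?thesis by (simp add: algebra_simps)
qed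

lemma rp_facts:
  fixes m q :: real
  assumes m: "m > 0" and mq: "m^2 \<ge> q^2"
  shows "rplus m q > 0" "q^2 = 2 * m * rplus m q - (rplus m q)^2"
    "\<And>s. s > rplus m q \<Longrightarrow> s > 0 \<and> fRN m q s > 0"
proof -
  define d where "d = sqrt (m^2 - q^2)"
  have d0: "d \<ge> 0" unfolding d_def using mq by simp
  have dd: "d^2 = m^2 - q^2" unfolding d_def using mq by simp
  have rp: "rplus m q = m + d" unfolding rplus_def d_def ..
  show "rplus m q > 0" using rp d0 m by simp
  show "q^2 = 2 * m * rplus m q - (rplus m q)^2" using rp dd by (simp add: power2_eq_square algebra_simps)
  fix s assume s: "s > rplus m q"
  then have s0: "s > 0" using rp d0 m by simp
  have "s^2 * fRN m q s = s^2 - 2 * m * s + q^2"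
    unfolding fRN_def using s0 by (simp add: field_simps power2_eq_square)
  also have "\<dots> = (s - m - d) * (s - m + d)"
    using dd by (simp add: algebra_simps power2_eq_square)
  moreover have "(s - m - d) * (s - m + d) > 0" using s rp d0 by (intro mult_pos_pos) auto
  ultimately have "s^2 * fRN m q s > 0" by simp
  then have "fRN m q s > 0" using s0 by (simp add: zero_less_mult_iff)
  then show "s > 0 \<and> fRN m q s > 0" using s0 by simp
qed

lemma coords_simps: "coords t r th ph 0 = t" "coords t r th ph 1 = r" "coords t r th ph 2 = th" "coords t r th ph 3 = ph"
  "coords t r th ph (Suc 0) = r"
  unfolding coords_def by auto

lemma k_eqs:
  assumes "r \<noteq> 0"
  shows "k01 m q r = (2*m*r - 3*q^2) / r^4" "kb m q r = (q^2 - m*r) / r^4" "k23 m q r = (2*m*r - q^2) / r^4"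
    "fRN m q r = (r^2 - 2*m*r + q^2) / r^2"
  using assms by (simp_all add: k01_def kb_def k23_def fRN_def fp_def fpp_def field_simps eval_nat_numeral)

lemma pt_xi1:
  assumes m: "m > 0" and mq: "m^2 \<ge> q^2" and r: "r > rplus m q" and th: "0 < th" "th < pi"
  shows "- jRN m q xi1 xi1 xi1 (coords t0 r th ph) 0 * r^2 = 1 * (0 / r^2 + 0 / r^3 + (6 * m^2) / r^4
     + (- 12 * m * (q^2 + m^2)) / r^5 + (7 * q^4 + 30 * m^2 * q^2) / r^6 + (- 26 * m * q^4) / r^7 + (7 * q^6) / r^8)"
proof -
  have R0: "\<And>s. s > rplus m q \<Longrightarrow> s \<noteq> 0 \<and> fRN m q s \<noteq> 0" using rp_facts(3)[OF m mq] by force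
  have s2: "sin (coords t0 r th ph 2) \<noteq> 0" using sin_gt_zero[OF th] by (simp add: coords_simps)
  have r0: "r > 0" using rp_facts(3)[OF m mq r] by simp
  have p1: "rplus m q < coords t0 r th ph 1" using r by (simp add: coords_simps)
  note j = jt_xi1[where p = "coords t0 r th ph", OF R0 p1 s2]
  have jj: "jRN m q xi1 xi1 xi1 (coords t0 r th ph) 0 = - fRN m q (coords t0 r th ph 1) / 2 * ((k01 m q (coords t0 r th ph 1))^2 + 4 * (kb m q (coords t0 r th ph 1))^2 + (k23 m q (coords t0 r th ph 1))^2)"
    unfolding jRN_def by (rule j)
  show ?thesis
    unfolding jj
    using r0 apply (simp add: coords_simps k_eqs)
    apply (simp add: field_simps)
    apply (simp add: algebra_simps power2_eq_square eval_nat_numeral)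
    done
qed

lemma pt_X:
  assumes m: "m > 0" and mq: "m^2 \<ge> q^2" and r: "r > rplus m q" and th: "0 < th" "th < pi"
    and X0: "X (coords t0 r th ph) 0 = 0" and X1: "X (coords t0 r th ph) 1 = 0"
  shows "- jRN m q X X xi1 (coords t0 r th ph) 0 * r^2 =
     ((X (coords t0 r th ph) 2)^2 + (sin th)^2 * (X (coords t0 r th ph) 3)^2) *
      ((4 * m^2) / r^2 + (- 8 * m * q^2) / r^3 + (13 * q^4 / 3) / r^4 + 0 / r^5 + 0 / r^6 + 0 / r^7 + 0 / r^8)"
proof -
  have R0: "\<And>s. s > rplus m q \<Longrightarrow> s \<noteq> 0 \<and> fRN m q s \<noteq> 0" using rp_facts(3)[OF m mq] by force
  have s2: "sin (coords t0 r th ph 2) \<noteq> 0" using sin_gt_zero[OF th] by (simp add: coords_simps)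
  have r0: "r > 0" using rp_facts(3)[OF m mq r] by simp
  have p1: "rplus m q < coords t0 r th ph 1" using r by (simp add: coords_simps)
  note j = jt_X[where p = "coords t0 r th ph" and X = X, OF R0 p1 s2 X0 X1]
  have jj: "jRN m q X X xi1 (coords t0 r th ph) 0 = - (dgm m q (coords t0 r th ph 1) (coords t0 r th ph 2) 2 * (X (coords t0 r th ph) 2)^2 + dgm m q (coords t0 r th ph 1) (coords t0 r th ph 2) 3 * (X (coords t0 r th ph) 3)^2) *
       ((k01 m q (coords t0 r th ph 1))^2 / 2 + (k23 m q (coords t0 r th ph 1))^2 / 2 - 2 * kb m q (coords t0 r th ph 1) * (k01 m q (coords t0 r th ph 1) + k23 m q (coords t0 r th ph 1))) / 3"
    unfolding jRN_def by (rule j)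
  show ?thesis
    unfolding jj
    using r0 apply (simp add: coords_simps k_eqs dgm_def)
    apply (simp add: field_simps)
    apply (simp add: algebra_simps power2_eq_square eval_nat_numeral)
    done
qed

lemma pt_EM:
  assumes m: "m > 0" and mq: "m^2 \<ge> q^2" and r: "r > rplus m q"
  shows "- EMcur m q xi1 (coords t0 r th ph) 0 * r^2 = 1 * (q^2 / r^2 + 0 / r^3 + 0 / r^4
     + 0 / r^5 + 0 / r^6 + 0 / r^7 + 0 / r^8)"
proof -
  have f: "fRN m q r > 0" "r > 0" using rp_facts(3)[OF m mq r] by auto
  then show ?thesis
    by (simp add: EMcur_def sum4 TmixRN_def giRN_eq gRN_eq xi1_def coords_simps dgm_def field_simps eval_nat_numeral)
qed

lemma Gt1: "((\<lambda>x. - cos x) has_real_derivative sin x * 1) (at x)"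
  by (auto intro!: derivative_eq_intros)
lemma Gt2: "((\<lambda>x. - ((sin ph)^2 * cos x + (cos ph)^2 * (cos x)^3 / 3)) has_real_derivative
   sin x * ((sin ph)^2 + (cos ph)^2 * (cos x)^2)) (at x)"
  by (auto intro!: derivative_eq_intros simp: algebra_simps power2_eq_square eval_nat_numeral)
lemma Gt3: "((\<lambda>x. - ((cos ph)^2 * cos x + (sin ph)^2 * (cos x)^3 / 3)) has_real_derivative
   sin x * ((cos ph)^2 + (sin ph)^2 * (cos x)^2)) (at x)"
  by (auto intro!: derivative_eq_intros simp: algebra_simps power2_eq_square eval_nat_numeral)
lemma Gt4: "((\<lambda>x. - cos x + (cos x)^3 / 3) has_real_derivative sin x * (sin x)^2) (at x)"
proof -
  have "((\<lambda>x. - cos x + (cos x)^3 / 3) has_real_derivative sin x - (cos x)^2 * sin x) (at x)"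
    by (auto intro!: derivative_eq_intros simp: algebra_simps power2_eq_square eval_nat_numeral)
  moreover have "sin x - (cos x)^2 * sin x = sin x * (sin x)^2"
    by (simp add: cos_squared_eq algebra_simps)
  ultimately show ?thesis by simp
qed

lemma Gp2: "((\<lambda>x. 4 * x / 3 - 2 / 3 * sin x * cos x) has_real_derivative
   ((- ((sin x)^2 * cos pi + (cos x)^2 * (cos pi)^3 / 3)) - (- ((sin x)^2 * cos 0 + (cos x)^2 * (cos 0)^3 / 3)))) (at x)"
proof -
  have "((\<lambda>x. 4 * x / 3 - 2 / 3 * sin x * cos x) has_real_derivative 4 / 3 - 2 / 3 * ((cos x)^2 - (sin x)^2)) (at x)"
    by (auto intro!: derivative_eq_intros simp: power2_eq_square field_simps)
  moreover have "4 / 3 - 2 / 3 * ((cos x)^2 - (sin x)^2) = (- ((sin x)^2 * cos pi + (cos x)^2 * (cos pi)^3 / 3)) - (- ((sin x)^2 * cos 0 + (cos x)^2 * (cos 0)^3 / 3))"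
    by (simp add: cos_squared_eq field_simps)
  ultimately show ?thesis by simp
qed

lemma Gp3: "((\<lambda>x. 4 * x / 3 + 2 / 3 * sin x * cos x) has_real_derivative
   ((- ((cos x)^2 * cos pi + (sin x)^2 * (cos pi)^3 / 3)) - (- ((cos x)^2 * cos 0 + (sin x)^2 * (cos 0)^3 / 3)))) (at x)"
proof -
  have "((\<lambda>x. 4 * x / 3 + 2 / 3 * sin x * cos x) has_real_derivative 4 / 3 + 2 / 3 * ((cos x)^2 - (sin x)^2)) (at x)"
    by (auto intro!: derivative_eq_intros simp: power2_eq_square field_simps)
  moreover have "4 / 3 + 2 / 3 * ((cos x)^2 - (sin x)^2) = (- ((cos x)^2 * cos pi + (sin x)^2 * (cos pi)^3 / 3)) - (- ((cos x)^2 * cos 0 + (sin x)^2 * (cos 0)^3 / 3))"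
    by (simp add: cos_squared_eq field_simps)
  ultimately show ?thesis by simp
qed

lemma Gp1: "((\<lambda>x. 2 * x) has_real_derivative (- cos pi) - (- cos 0)) (at x)"
  by (auto intro!: derivative_eq_intros)
lemma Gp4: "((\<lambda>x. 4 * x / 3) has_real_derivative (- cos pi + (cos pi)^3 / 3) - (- cos 0 + (cos 0)^3 / 3)) (at x)"
  by (auto intro!: derivative_eq_intros)

lemma pt_xi2:
  assumes m: "m > 0" and mq: "m^2 \<ge> q^2" and r: "r > rplus m q" and th: "0 < th" "th < pi"
  shows "- jRN m q xi2 xi2 xi1 (coords t0 r th ph) 0 * r^2 = ((sin ph)^2 + (cos ph)^2 * (cos th)^2) * ((4 * m^2) / r^2 + (- 8 * m * q^2) / r^3 + (13 * q^4 / 3) / r^4 + 0 / r^5 + 0 / r^6 + 0 / r^7 + 0 / r^8)"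
proof -
  have s: "sin th \<noteq> 0" using sin_gt_zero[OF th] by simp
  have e: "(sin th)^2 * (cos ph * cot th)^2 = (cos ph)^2 * (cos th)^2"
    using s by (simp add: cot_def field_simps)
  show ?thesis
    using pt_X[OF m mq r th, of xi2 t0 ph] e by (simp add: xi2_def coords_simps)
qed

lemma pt_xi3:
  assumes m: "m > 0" and mq: "m^2 \<ge> q^2" and r: "r > rplus m q" and th: "0 < th" "th < pi"
  shows "- jRN m q xi3 xi3 xi1 (coords t0 r th ph) 0 * r^2 = ((cos ph)^2 + (sin ph)^2 * (cos th)^2) * ((4 * m^2) / r^2 + (- 8 * m * q^2) / r^3 + (13 * q^4 / 3) / r^4 + 0 / r^5 + 0 / r^6 + 0 / r^7 + 0 / r^8)"
proof -
  have s: "sin th \<noteq> 0" using sin_gt_zero[OF th] by simp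
  have e: "(sin th)^2 * (- sin ph * cot th)^2 = (sin ph)^2 * (cos th)^2"
    using s by (simp add: cot_def field_simps)
  show ?thesis
    using pt_X[OF m mq r th, of xi3 t0 ph] e by (simp add: xi3_def coords_simps)
qed

lemma pt_xi4:
  assumes m: "m > 0" and mq: "m^2 \<ge> q^2" and r: "r > rplus m q" and th: "0 < th" "th < pi"
  shows "- jRN m q xi4 xi4 xi1 (coords t0 r th ph) 0 * r^2 = (sin th)^2 * ((4 * m^2) / r^2 + (- 8 * m * q^2) / r^3 + (13 * q^4 / 3) / r^4 + 0 / r^5 + 0 / r^6 + 0 / r^7 + 0 / r^8)"
  using pt_X[OF m mq r th, of xi4 t0 ph] by (simp add: xi4_def coords_simps)

lemma Q1_raw:
  assumes m: "m > 0" and mq: "m^2 \<ge> q^2"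
  shows "Qflux m q t0 (jRN m q xi1 xi1 xi1) = (2 * (2 * pi) - 2 * 0) * (0 / rplus m q + 0 / (2 * (rplus m q)^2) + (6 * m^2) / (3 * (rplus m q)^3) + (- 12 * m * (q^2 + m^2)) / (4 * (rplus m q)^4) + (7 * q^4 + 30 * m^2 * q^2) / (5 * (rplus m q)^5) + (- 26 * m * q^4) / (6 * (rplus m q)^6) + (7 * q^6) / (7 * (rplus m q)^7))"
  apply (rule Qflux_gen[where S = "\<lambda>th ph. 1" and Gt = "\<lambda>ph x. - cos x" and Gp = "\<lambda>x. 2 * x"])
       apply (simp add: rp_facts(1)[OF m mq])
      apply (rule pt_xi1[OF m mq]; assumption)
     apply (rule Gt1)
    apply (intro continuous_intros; simp)
   apply (rule Gp1)
  apply (intro continuous_intros; simp)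
  done

lemma QE_raw:
  assumes m: "m > 0" and mq: "m^2 \<ge> q^2"
  shows "Qflux m q t0 (EMcur m q xi1) = (2 * (2 * pi) - 2 * 0) * (q^2 / rplus m q + 0 / (2 * (rplus m q)^2) + 0 / (3 * (rplus m q)^3) + 0 / (4 * (rplus m q)^4) + 0 / (5 * (rplus m q)^5) + 0 / (6 * (rplus m q)^6) + 0 / (7 * (rplus m q)^7))"
  apply (rule Qflux_gen[where S = "\<lambda>th ph. 1" and Gt = "\<lambda>ph x. - cos x" and Gp = "\<lambda>x. 2 * x"])
       apply (simp add: rp_facts(1)[OF m mq])
      apply (rule pt_EM[OF m mq]; assumption)
     apply (rule Gt1)
    apply (intro continuous_intros; simp)
   apply (rule Gp1)
  apply (intro continuous_intros; simp)
  done

lemma Q2_raw: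
  assumes m: "m > 0" and mq: "m^2 \<ge> q^2"
  shows "Qflux m q t0 (jRN m q xi2 xi2 xi1) = ((4 * (2 * pi) / 3 - 2 / 3 * sin (2 * pi) * cos (2 * pi)) - (4 * 0 / 3 - 2 / 3 * sin 0 * cos 0)) * ((4 * m^2) / rplus m q + (- 8 * m * q^2) / (2 * (rplus m q)^2) + (13 * q^4 / 3) / (3 * (rplus m q)^3) + 0 / (4 * (rplus m q)^4) + 0 / (5 * (rplus m q)^5) + 0 / (6 * (rplus m q)^6) + 0 / (7 * (rplus m q)^7))"
  apply (rule Qflux_gen[where S = "\<lambda>th ph. (sin ph)^2 + (cos ph)^2 * (cos th)^2"
        and Gt = "\<lambda>ph x. - ((sin ph)^2 * cos x + (cos ph)^2 * (cos x)^3 / 3)" and Gp = "\<lambda>x. 4 * x / 3 - 2 / 3 * sin x * cos x"])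
       apply (simp add: rp_facts(1)[OF m mq])
      apply (rule pt_xi2[OF m mq]; assumption)
     apply (rule Gt2)
    apply (intro continuous_intros; simp)
   apply (rule Gp2)
  apply (intro continuous_intros; simp)
  done

lemma Q3_raw:
  assumes m: "m > 0" and mq: "m^2 \<ge> q^2"
  shows "Qflux m q t0 (jRN m q xi3 xi3 xi1) = ((4 * (2 * pi) / 3 + 2 / 3 * sin (2 * pi) * cos (2 * pi)) - (4 * 0 / 3 + 2 / 3 * sin 0 * cos 0)) * ((4 * m^2) / rplus m q + (- 8 * m * q^2) / (2 * (rplus m q)^2) + (13 * q^4 / 3) / (3 * (rplus m q)^3) + 0 / (4 * (rplus m q)^4) + 0 / (5 * (rplus m q)^5) + 0 / (6 * (rplus m q)^6) + 0 / (7 * (rplus m q)^7))"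
  apply (rule Qflux_gen[where S = "\<lambda>th ph. (cos ph)^2 + (sin ph)^2 * (cos th)^2"
        and Gt = "\<lambda>ph x. - ((cos ph)^2 * cos x + (sin ph)^2 * (cos x)^3 / 3)" and Gp = "\<lambda>x. 4 * x / 3 + 2 / 3 * sin x * cos x"])
       apply (simp add: rp_facts(1)[OF m mq])
      apply (rule pt_xi3[OF m mq]; assumption)
     apply (rule Gt3)
    apply (intro continuous_intros; simp)
   apply (rule Gp3)
  apply (intro continuous_intros; simp)
  done

lemma Q4_raw:
  assumes m: "m > 0" and mq: "m^2 \<ge> q^2"
  shows "Qflux m q t0 (jRN m q xi4 xi4 xi1) = (4 * (2 * pi) / 3 - 4 * 0 / 3) * ((4 * m^2) / rplus m q + (- 8 * m * q^2) / (2 * (rplus m q)^2) + (13 * q^4 / 3) / (3 * (rplus m q)^3) + 0 / (4 * (rplus m q)^4) + 0 / (5 * (rplus m q)^5) + 0 / (6 * (rplus m q)^6) + 0 / (7 * (rplus m q)^7))"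
  apply (rule Qflux_gen[where S = "\<lambda>th ph. (sin th)^2"
        and Gt = "\<lambda>ph x. - cos x + (cos x)^3 / 3" and Gp = "\<lambda>x. 4 * x / 3"])
       apply (simp add: rp_facts(1)[OF m mq])
      apply (rule pt_xi4[OF m mq]; assumption)
     apply (rule Gt4)
    apply (intro continuous_intros; simp)
   apply (rule Gp4)
  apply (intro continuous_intros; simp)
  done

lemma alg1:
  fixes a m q :: real
  assumes a0: "a > 0" and hq: "q^2 = 2 * m * a - a^2"
  shows "(2 * (2 * pi) - 2 * 0) * (0 / a + 0 / (2 * a^2) + (6 * m^2) / (3 * a^3) + (- 12 * m * (q^2 + m^2)) / (4 * a^4) + (7 * q^4 + 30 * m^2 * q^2) / (5 * a^5) + (- 26 * m * q^4) / (6 * a^6) + (7 * q^6) / (7 * a^7))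
    = 4 * pi / (15 * a) * (6 - 14 * m / a + 14 * m^2 / a^2 - 5 * m^3 / a^3)"
proof -
  have q4: "q^4 = (q^2)^2" and q6: "q^6 = (q^2)^3" by simp_all
  show ?thesis unfolding q4 q6 hq using a0
    by (simp add: field_simps) (simp add: algebra_simps power2_eq_square eval_nat_numeral)
qed

lemma alg2:
  fixes a m q :: real
  assumes a0: "a > 0" and hq: "q^2 = 2 * m * a - a^2"
  shows "(4 * m^2) / a + (- 8 * m * q^2) / (2 * a^2) + (13 * q^4 / 3) / (3 * a^3) + 0 / (4 * a^4) + 0 / (5 * a^5) + 0 / (6 * a^6) + 0 / (7 * a^7)
    = a / 9 * (13 - 16 * m / a + 16 * m^2 / a^2)"
proof -
  have q4: "q^4 = (q^2)^2" by simp
  show ?thesis unfolding q4 hq using a0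
    by (simp add: field_simps) (simp add: algebra_simps power2_eq_square eval_nat_numeral)
qed

theorem mainTheorem8:
  fixes m q t0 :: real
  assumes "m > 0" and "m^2 \<ge> q^2"
  shows "Qflux m q t0 (jRN m q xi1 xi1 xi1)
           = 4 * pi / (15 * rplus m q) * (6 - 14 * m / rplus m q + 14 * m^2 / (rplus m q)^2
                                          - 5 * m^3 / (rplus m q)^3)
       \<and> (\<forall>xa \<in> {xi2, xi3, xi4}. Qflux m q t0 (jRN m q xa xa xi1)
           = 8 * pi / 27 * rplus m q * (13 - 16 * m / rplus m q + 16 * m^2 / (rplus m q)^2))
       \<and> Qflux m q t0 (EMcur m q xi1) = 4 * pi * q^2 / rplus m q
       \<and> (q = 0 \<longrightarrow> Qflux m q t0 (jRN m q xi1 xi1 xi1) = pi / (4 * m)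
                  \<and> (\<forall>xa \<in> {xi2, xi3, xi4}. Qflux m q t0 (jRN m q xa xa xi1) = 16 * pi * m / 3))"

proof -
  define a where "a = rplus m q"
  have a0: "a > 0" using rp_facts(1)[OF assms] unfolding a_def .
  have hq: "q^2 = 2 * m * a - a^2" using rp_facts(2)[OF assms] unfolding a_def .
  have E1: "Qflux m q t0 (jRN m q xi1 xi1 xi1) = 4 * pi / (15 * a) * (6 - 14 * m / a + 14 * m^2 / a^2 - 5 * m^3 / a^3)"
    using Q1_raw[OF assms, of t0] alg1[OF a0 hq] unfolding a_def by simp
  have K2: "Qflux m q t0 (jRN m q xa xa xi1) = 8 * pi / 27 * a * (13 - 16 * m / a + 16 * m^2 / a^2)"
    if "xa \<in> {xi2, xi3, xi4}" for xa
  proof -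
    have F2: "(4 * (2 * pi) / 3 - 2 / 3 * sin (2 * pi) * cos (2 * pi)) - (4 * 0 / 3 - 2 / 3 * sin 0 * cos 0) = 8 * pi / 3"
      by simp
    have F3: "(4 * (2 * pi) / 3 + 2 / 3 * sin (2 * pi) * cos (2 * pi)) - (4 * 0 / 3 + 2 / 3 * sin 0 * cos 0) = 8 * pi / 3"
      by simp
    have F4: "4 * (2 * pi) / 3 - 4 * 0 / 3 = 8 * pi / 3" by simp
    have c2: "Qflux m q t0 (jRN m q xi2 xi2 xi1) = 8 * pi / 3 * (a / 9 * (13 - 16 * m / a + 16 * m^2 / a^2))"
      using Q2_raw[OF assms, of t0, folded a_def] unfolding F2 alg2[OF a0 hq] by simp
    have c3: "Qflux m q t0 (jRN m q xi3 xi3 xi1) = 8 * pi / 3 * (a / 9 * (13 - 16 * m / a + 16 * m^2 / a^2))"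
      using Q3_raw[OF assms, of t0, folded a_def] unfolding F3 alg2[OF a0 hq] by simp
    have c4: "Qflux m q t0 (jRN m q xi4 xi4 xi1) = 8 * pi / 3 * (a / 9 * (13 - 16 * m / a + 16 * m^2 / a^2))"
      using Q4_raw[OF assms, of t0, folded a_def] unfolding F4 alg2[OF a0 hq] by simp
    have "Qflux m q t0 (jRN m q xa xa xi1) = 8 * pi / 3 * (a / 9 * (13 - 16 * m / a + 16 * m^2 / a^2))"
      using that c2 c3 c4 by auto
    then show ?thesis using a0 by (simp add: field_simps)
  qed
  have EE: "Qflux m q t0 (EMcur m q xi1) = 4 * pi * q^2 / a"
    using QE_raw[OF assms, of t0] unfolding a_def by simp
  have Z: "a = 2 * m" if "q = 0"
    unfolding a_def rplus_def using that assms(1) by simp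
  show ?thesis
    unfolding a_def[symmetric]
    using E1 K2 EE Z assms(1)
    by (auto simp: field_simps eval_nat_numeral)
qed

end
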